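(* Let $m\ge1$ and let $X_1,\dots,X_m$ be independent random variables, $X_i$ geometric with success probability $p_i\in(0,1]$. Let $Y_1,\dots,Y_m$ be i.i.d. geometric random variables with success probability $\bar p=\frac1m\sum_{i=1}^mp_i$, independent of $X_1,\dots,X_m$. Then for every positive integer $j$, $$\mathbb{P}\Big(\sum_{i=1}^mX_i\ge j\Big)\ge\mathbb{P}\Big(\sum_{i=1}^mY_i\ge j\Big).$$
   Context: A random variable $Y$ is geometric with success probability $p$ if $\mathbb{P}(Y=s)=(1-p)^{s-1}p$ for $s=1,2,\dots$. *)

theory Defs
  imports "HOL-Probability.Probability"
begin

definition geometric_rv :: "'a measure \<Rightarrow> ('a \<Rightarrow> nat) \<Rightarrow> real \<Rightarrow> bool" where
  "geometric_rv M X p \<longleftrightarrow>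
     X \<in> measurable M (count_space UNIV) \<and>
     (\<forall>s::nat. s \<ge> 1 \<longrightarrow> measure M {\<omega> \<in> space M. X \<omega> = s} = (1 - p) ^ (s - 1) * p)"

end

theory Submission
  imports Defs
begin

definition geom :: "real \<Rightarrow> nat pmf" where "geom p = map_pmf Suc (geometric_pmf p)"

lemma pmf_geom:
  assumes "0 < p" "p \<le> 1"
  shows "pmf (geom p) s = (if s = 0 then 0 else (1-p)^(s-1)*p)"
proof (cases s)
  case 0
  then show ?thesis unfolding geom_def by (auto intro!: pmf_map_outside)
next
  case (Suc k)
  then show ?thesis unfolding geom_def using assms by (simp add: pmf_map_inj')
qed

lemma cdf_geom:
  assumes "0 < p" "p \<le> 1"
  shows "measure_pmf.prob (geom p) {..k} = 1 - (1-p)^k"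
proof -
  have "measure_pmf.prob (geom p) {..k} = (\<Sum>s\<le>k. pmf (geom p) s)"
    by (simp add: measure_measure_pmf_finite)
  also have "\<dots> = 1 - (1-p)^k"
    by (induction k) (auto simp: pmf_geom[OF assms] algebra_simps)
  finally show ?thesis .
qed

definition addp :: "nat pmf \<Rightarrow> nat pmf \<Rightarrow> nat pmf" where
  "addp A B = map_pmf (\<lambda>(a,b). a+b) (pair_pmf A B)"

lemma addp_assoc: "addp A (addp B C) = addp (addp A B) C"
  unfolding addp_def pair_pmf_def
  by (simp add: map_bind_pmf bind_map_pmf bind_assoc_pmf bind_return_pmf map_return_pmf add.assoc)

lemma prob_addp:
  "measure_pmf.prob (addp A R) {..n} = (\<Sum>r\<le>n. pmf R r * measure_pmf.prob A {..n-r})"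
proof -
  let ?T = "{(a,b). a + b \<le> (n::nat)}"
  have T: "?T = (\<lambda>(r,a). (a,r)) ` (SIGMA r:{..n}. {..n-r})" by force
  have fin: "finite ?T" by (subst T) auto
  have "measure_pmf.prob (addp A R) {..n} = measure_pmf.prob (pair_pmf A R) ?T"
    unfolding addp_def by (simp add: vimage_def case_prod_beta) (metis (no_types, lifting) case_prod_beta)
  also have "\<dots> = (\<Sum>x\<in>?T. pmf (pair_pmf A R) x)" using fin by (simp add: measure_measure_pmf_finite)
  also have "\<dots> = (\<Sum>x\<in>(SIGMA r:{..n}. {..n-r}). pmf A (snd x) * pmf R (fst x))"
    by (subst T, subst sum.reindex) (auto simp: inj_on_def pmf_pair case_prod_beta)
  also have "\<dots> = (\<Sum>r\<le>n. \<Sum>a\<le>n-r. pmf A a * pmf R r)"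
    by (subst sum.Sigma) (auto simp: case_prod_beta)
  also have "\<dots> = (\<Sum>r\<le>n. pmf R r * measure_pmf.prob A {..n-r})"
    by (simp add: measure_measure_pmf_finite sum_distrib_left sum_distrib_right mult.commute)
  finally show ?thesis .
qed

lemma dom_addp:
  assumes "\<And>k. measure_pmf.prob A {..k} \<le> measure_pmf.prob B {..k}"
  shows "measure_pmf.prob (addp A R) {..n} \<le> measure_pmf.prob (addp B R) {..n}"
  unfolding prob_addp by (intro sum_mono mult_left_mono assms) auto


definition H :: "real \<Rightarrow> real \<Rightarrow> nat \<Rightarrow> real" where
  "H x y k = (\<Sum>i\<le>k. x^i * y^(k-i))"

lemma H_0[simp]: "H x y 0 = 1" by (simp add: H_def)

lemma H_Suc: "H x y (Suc k) = x^(Suc k) + y * H x y k"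
proof -
  have "H x y (Suc k) = (\<Sum>i\<le>k. x^i * y^(Suc k-i)) + x^(Suc k)"
    by (simp add: H_def)
  also have "(\<Sum>i\<le>k. x^i * y^(Suc k-i)) = y * H x y k"
    unfolding H_def sum_distrib_left
    by (intro sum.cong) (auto simp: Suc_diff_le)
  finally show ?thesis by simp
qed

lemma H_Suc': "H x y (Suc k) = y^(Suc k) + x * H x y k"
proof -
  have "H x y (Suc k) = y^(Suc k) + (\<Sum>i\<le>k. x^(Suc i) * y^(Suc k - Suc i))"
    unfolding H_def by (subst sum.atMost_Suc_shift) simp
  also have "(\<Sum>i\<le>k. x^(Suc i) * y^(Suc k - Suc i)) = x * H x y k"
    unfolding H_def sum_distrib_left by (intro sum.cong) auto
  finally show ?thesis .
qed

lemma H_sym: "H x y k = H y x k"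
proof -
  have "H x y k = (\<Sum>i=0..k. x^i * y^(k-i))" by (simp add: H_def atMost_atLeast0)
  also have "\<dots> = (\<Sum>i=0..k. x^(k+0-i) * y^(k-(k+0-i)))"
    by (rule sum.atLeastAtMost_rev)
  also have "\<dots> = (\<Sum>i=0..k. y^i * x^(k-i))"
    by (intro sum.cong) auto
  finally show ?thesis by (simp add: H_def atMost_atLeast0)
qed

lemma H_rec: "H x y (Suc (Suc k)) = (x+y) * H x y (Suc k) - x*y*H x y k"
proof -
  have a: "H x y (Suc (Suc k)) = x^(Suc (Suc k)) + y * H x y (Suc k)" by (rule H_Suc)
  have b: "H x y (Suc k) = y^(Suc k) + x * H x y k" by (rule H_Suc')
  have c: "H x y (Suc k) = x^(Suc k) + y * H x y k" by (rule H_Suc)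
  have "x * H x y (Suc k) = x^(Suc(Suc k)) + x*y*H x y k" using c by (simp add: algebra_simps)
  then show ?thesis using a by (simp add: algebra_simps)
qed

fun Hs :: "real \<Rightarrow> real \<Rightarrow> nat \<Rightarrow> real" where
  "Hs s u 0 = 1"
| "Hs s u (Suc 0) = 2* s"
| "Hs s u (Suc (Suc k)) = 2* s*Hs s u (Suc k) - (s^2 - u) * Hs s u k"

lemma H_Hs: "H (s-t) (s+t) k = Hs s (t^2) k"
proof (induction s "t^2" k rule: Hs.induct)
  case (1 s)
  then show ?case by simp
next
  case (2 s)
  then show ?case by (simp add: H_Suc)
next
  case (3 s k)
  then show ?case by (simp add: H_rec power2_eq_square algebra_simps)
qed

lemma Hs_mono:
  assumes "0 \<le> s" "0 \<le> u" "u \<le> u'"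
  shows "0 \<le> Hs s u k \<and> Hs s u k \<le> Hs s u' k \<and>
         0 \<le> Hs s u (Suc k) - s*Hs s u k \<and>
         Hs s u (Suc k) - s*Hs s u k \<le> Hs s u' (Suc k) - s*Hs s u' k"
proof (induction k)
  case 0
  then show ?case using assms by simp
next
  case (Suc k)
  have d: "\<And>v. Hs s v (Suc (Suc k)) - s * Hs s v (Suc k) = s * (Hs s v (Suc k) - s*Hs s v k) + v * Hs s v k"
    by (simp add: power2_eq_square algebra_simps)
  have e: "\<And>v. Hs s v (Suc k) = s * Hs s v k + (Hs s v (Suc k) - s*Hs s v k)" by simp
  from Suc have i1: "0 \<le> Hs s u k" "Hs s u k \<le> Hs s u' k"
    and i2: "0 \<le> Hs s u (Suc k) - s*Hs s u k"
       "Hs s u (Suc k) - s*Hs s u k \<le> Hs s u' (Suc k) - s*Hs s u' k" by auto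
  have m1: "s * Hs s u k \<le> s * Hs s u' k" using i1 assms by (intro mult_left_mono) auto
  have m2: "s * (Hs s u (Suc k) - s*Hs s u k) \<le> s * (Hs s u' (Suc k) - s*Hs s u' k)"
    using i2 assms by (intro mult_left_mono) auto
  have m3: "u * Hs s u k \<le> u' * Hs s u' k" using i1 assms by (intro mult_mono) auto
  have p1: "0 \<le> s * Hs s u k" using i1 assms by simp
  have p2: "0 \<le> s * (Hs s u (Suc k) - s*Hs s u k)" using i2 assms by simp
  have p3: "0 \<le> u * Hs s u k" using i1 assms by simp
  show ?case
    using d[of u] d[of u'] i1 i2 m1 m2 m3 p1 p2 p3 by linarith
qed

lemma tail_mono:
  assumes "0 \<le> s" "s \<le> 1" "0 \<le> u" "u \<le> u'"
  shows "Hs s u (Suc k) - (s^2 - u) * Hs s u k \<le> Hs s u' (Suc k) - (s^2 - u') * Hs s u' k"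
proof -
  have e: "\<And>v. Hs s v (Suc k) - (s^2 - v) * Hs s v k
      = s*(1-s)*Hs s v k + (Hs s v (Suc k) - s*Hs s v k) + v * Hs s v k"
    by (simp add: power2_eq_square algebra_simps)
  note h = Hs_mono[OF assms(1,3,4), of k]
  have "s*(1-s)*Hs s u k \<le> s*(1-s)*Hs s u' k" using h assms by (intro mult_left_mono) auto
  moreover have "u * Hs s u k \<le> u' * Hs s u' k" using h assms by (intro mult_mono) auto
  ultimately show ?thesis unfolding e using h by linarith
qed

definition cdf2 where "cdf2 a b n = measure_pmf.prob (addp (geom a) (geom b)) {..n}"

lemma cdf2_formula:
  assumes "0 < a" "a \<le> 1" "0 < b" "b \<le> 1"
  shows "cdf2 a b (Suc m) = 1 - (1-b)^(Suc m) - b * H (1-a) (1-b) m"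
proof -
  let ?x = "1-a" and ?y = "1-b"
  have "cdf2 a b (Suc m) = (\<Sum>r\<le>Suc m. pmf (geom b) r * (1 - ?x^(Suc m - r)))"
    unfolding cdf2_def prob_addp using assms by (simp add: cdf_geom)
  also have "\<dots> = (\<Sum>r\<le>m. pmf (geom b) (Suc r) * (1 - ?x^(m - r)))"
    by (subst sum.atMost_Suc_shift) (simp add: pmf_geom assms)
  also have "\<dots> = (\<Sum>r\<le>m. b * ?y^r) - b * (\<Sum>r\<le>m. ?y^r * ?x^(m-r))"
    using assms by (simp add: pmf_geom sum_subtractf sum_distrib_left algebra_simps)
  also have "(\<Sum>r\<le>m. b * ?y^r) = 1 - ?y^(Suc m)"
    by (induction m) (auto simp: algebra_simps)
  also have "(\<Sum>r\<le>m. ?y^r * ?x^(m-r)) = H ?x ?y m"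
    using H_sym[of ?y ?x m] by (simp add: H_def)
  finally show ?thesis .
qed

lemma cdf2_tail:
  assumes "0 < a" "a \<le> 1" "0 < b" "b \<le> 1"
  shows "cdf2 a b (Suc (Suc k)) = 1 - (H (1-a) (1-b) (Suc k) - (1-a)*(1-b)* H (1-a) (1-b) k)"
  using cdf2_formula[OF assms, of "Suc k"] H_Suc'[of "1-a" "1-b" k]
  by (simp add: algebra_simps)

lemma cdf2_le:
  assumes "0 < a" "a \<le> 1" "0 < b" "b \<le> 1" "0 < c" "c \<le> 1" "0 < d" "d \<le> 1"
    and "a + b = c + d" and "\<bar>c - d\<bar> \<le> \<bar>a - b\<bar>"
  shows "cdf2 a b n \<le> cdf2 c d n"
proof (cases n)
  case 0
  then show ?thesis unfolding cdf2_def prob_addp by (simp add: pmf_geom assms)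
next
  case (Suc m)
  show ?thesis
  proof (cases m)
    case 0
    then show ?thesis using Suc cdf2_formula[OF assms(1-4), of 0] cdf2_formula[OF assms(5-8), of 0]
      by simp
  next
    case (Suc k)
    define s where "s = 1 - (a+b)/2"
    have s: "0 \<le> s" "s \<le> 1" using assms unfolding s_def by auto
    have ab: "1-a = s - (a-b)/2" "1-b = s + (a-b)/2" "1-c = s - (c-d)/2" "1-d = s + (c-d)/2"
      using assms(9) unfolding s_def by (auto simp: field_simps)
    have u: "((c-d)/2)^2 \<le> ((a-b)/2)^2"
      using assms(10) by (simp add: power_divide abs_le_square_iff)
    have key: "\<And>t. H (s-t) (s+t) (Suc k) - (s-t)*(s+t)*H (s-t) (s+t) k
               = Hs s (t^2) (Suc k) - (s^2 - t^2) * Hs s (t^2) k"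
      by (simp only: H_Hs) (simp add: power2_eq_square algebra_simps)
    have "Hs s (((c-d)/2)^2) (Suc k) - (s^2 - ((c-d)/2)^2) * Hs s (((c-d)/2)^2) k
        \<le> Hs s (((a-b)/2)^2) (Suc k) - (s^2 - ((a-b)/2)^2) * Hs s (((a-b)/2)^2) k"
      by (rule tail_mono[OF s _ u]) simp
    then show ?thesis
      using \<open>n = Suc m\<close> Suc cdf2_tail[OF assms(1-4), of k] cdf2_tail[OF assms(5-8), of k]
      unfolding ab key by simp
  qed
qed


definition SD :: "nat set \<Rightarrow> (nat \<Rightarrow> real) \<Rightarrow> nat pmf" where
  "SD I q = map_pmf (\<lambda>f. \<Sum>i\<in>I. f i) (Pi_pmf I 0 (\<lambda>i. geom (q i)))"

lemma SD_cong: "(\<And>i. i \<in> I \<Longrightarrow> q i = q' i) \<Longrightarrow> SD I q = SD I q'"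
  unfolding SD_def by (simp cong: Pi_pmf_cong)

lemma SD_insert:
  assumes "finite I" "i \<notin> I"
  shows "SD (insert i I) q = addp (geom (q i)) (SD I q)"
proof -
  have "SD (insert i I) q = map_pmf (\<lambda>(y,f). y + (\<Sum>j\<in>I. f j)) (pair_pmf (geom (q i)) (Pi_pmf I 0 (\<lambda>i. geom (q i))))"
  proof -
    have fe: "\<And>y f. (\<Sum>j\<in>insert i I. (f(i:=y)) j) = y + sum f I"
    proof -
      fix y f
      have "sum (f(i:=y)) I = sum f I" using assms(2) by (intro sum.cong) auto
      then show "(\<Sum>j\<in>insert i I. (f(i:=y)) j) = y + sum f I" using assms by simp
    qed
    show ?thesis unfolding SD_def using assms
      apply (subst Pi_pmf_insert[OF assms])
      apply (subst map_pmf_comp)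
      apply (intro map_pmf_cong refl)
      using fe by (auto split: prod.splits simp del: fun_upd_apply)
  qed
  also have "\<dots> = addp (geom (q i)) (SD I q)"
    unfolding addp_def SD_def by (simp add: pair_map_pmf2 map_pmf_comp split_def o_def)
  finally show ?thesis .
qed

lemma SD_robin:
  fixes c :: real
  assumes "finite I"
  shows "\<And>q. (\<forall>i\<in>I. 0 < q i \<and> q i \<le> 1) \<Longrightarrow> (\<Sum>i\<in>I. q i) = c * card I \<Longrightarrow> card {i\<in>I. q i \<noteq> c} = N \<Longrightarrow>
     measure_pmf.prob (SD I q) {..n} \<le> measure_pmf.prob (SD I (\<lambda>_. c)) {..n}"
proof (induction N rule: less_induct)
  case (less N q)
  show ?case
  proof (cases "\<forall>i\<in>I. q i = c")
    case True
    then have "SD I q = SD I (\<lambda>_. c)" by (intro SD_cong) auto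
    then show ?thesis by simp
  next
    case False
    have sum0: "(\<Sum>i\<in>I. q i - c) = 0" using less.prems(2) by (simp add: sum_subtractf)
    have ex1: "\<exists>i\<in>I. q i < c"
    proof (rule ccontr)
      assume "\<not> ?thesis"
      then have "\<forall>i\<in>I. 0 \<le> q i - c" by (simp add: not_less)
      then have "\<forall>i\<in>I. q i - c = 0" using sum_nonneg_eq_0_iff[OF assms, of "\<lambda>i. q i - c"] sum0 by simp
      then show False using False by auto
    qed
    then obtain i where i: "i \<in> I" "q i < c" by blast
    have ex2: "\<exists>k\<in>I. q k > c"
    proof (rule ccontr)
      assume "\<not> ?thesis"
      then have "\<forall>i\<in>I. 0 \<le> c - q i" by (simp add: not_less)
      moreover have "(\<Sum>i\<in>I. c - q i) = 0" using sum0 by (simp add: sum_subtractf)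
      ultimately have "\<forall>i\<in>I. c - q i = 0" using sum_nonneg_eq_0_iff[OF assms, of "\<lambda>i. c - q i"] by simp
      then show False using False by auto
    qed
    then obtain k where k: "k \<in> I" "q k > c" by blast
    have ik: "i \<noteq> k" using i k by auto
    define q' where "q' = q(i := c, k := q i + q k - c)"
    define R where "R = I - {i,k}"
    have IR: "I = insert i (insert k R)" "finite R" "i \<notin> R" "k \<notin> R" "i \<notin> insert k R"
      using i k ik assms unfolding R_def by auto
    have qR: "\<And>j. j \<in> R \<Longrightarrow> q' j = q j" unfolding q'_def R_def by auto
    have q'i: "q' i = c" "q' k = q i + q k - c" unfolding q'_def using ik by auto
    have qi: "0 < q i" "q i \<le> 1" "0 < q k" "q k \<le> 1" using less.prems(1) i k by auto
    have b1: "\<forall>j\<in>I. 0 < q' j \<and> q' j \<le> 1"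
      using less.prems(1) qi i k unfolding q'_def by auto
    have "(\<Sum>j\<in>I. q' j) = q' i + q' k + (\<Sum>j\<in>R. q' j)" using IR by simp
    also have "\<dots> = q i + q k + (\<Sum>j\<in>R. q j)" using q'i qR by simp
    also have "\<dots> = (\<Sum>j\<in>I. q j)" using IR by simp
    finally have b2: "(\<Sum>j\<in>I. q' j) = c * card I" using less.prems(2) by simp
    have sub: "{j\<in>I. q' j \<noteq> c} \<subset> {j\<in>I. q j \<noteq> c}"
    proof
      show "{j\<in>I. q' j \<noteq> c} \<subseteq> {j\<in>I. q j \<noteq> c}"
      proof (rule subsetI)
        fix j assume j: "j \<in> {j\<in>I. q' j \<noteq> c}"
        show "j \<in> {j\<in>I. q j \<noteq> c}"
        proof (cases "j = i \<or> j = k")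
          case True
          then show ?thesis using j k q'i by auto
        next
          case False
          then have "q' j = q j" unfolding q'_def by simp
          then show ?thesis using j by simp
        qed
      qed
      have "i \<in> {j\<in>I. q j \<noteq> c}" using i by simp
      moreover have "i \<notin> {j\<in>I. q' j \<noteq> c}" using q'i by simp
      ultimately show "{j\<in>I. q' j \<noteq> c} \<noteq> {j\<in>I. q j \<noteq> c}" by blast
    qed
    have lt: "card {j\<in>I. q' j \<noteq> c} < N"
      using psubset_card_mono[OF _ sub] assms less.prems(3) by simp
    have IH: "measure_pmf.prob (SD I q') {..n} \<le> measure_pmf.prob (SD I (\<lambda>_. c)) {..n}"
      using less.IH[OF lt b1 b2] by simp
    have dec: "\<And>r. SD I r = addp (addp (geom (r i)) (geom (r k))) (SD R r)"
      using IR by (simp add: SD_insert addp_assoc)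
    have "measure_pmf.prob (SD I q) {..n} \<le> measure_pmf.prob (SD I q') {..n}"
    proof -
      have "SD R q' = SD R q" using qR by (rule SD_cong)
      moreover have "\<And>m. cdf2 (q i) (q k) m \<le> cdf2 (q' i) (q' k) m"
        using qi q'i i k by (intro cdf2_le) auto
      ultimately show ?thesis
        unfolding dec[of q] dec[of q'] cdf2_def by (simp add: dom_addp)
    qed
    then show ?thesis using IH by linarith
  qed
qed


lemma prob_sum_le:
  fixes X :: "nat \<Rightarrow> 'a \<Rightarrow> nat" and G :: "nat \<Rightarrow> nat pmf"
  assumes M: "prob_space M" and fin: "finite I"
    and meas: "\<And>i. i \<in> I \<Longrightarrow> X i \<in> measurable M (count_space UNIV)"
    and ind: "\<And>f. I \<noteq> {} \<Longrightarrow> measure M (\<Inter>i\<in>I. X i -` {f i} \<inter> space M) = (\<Prod>i\<in>I. measure M (X i -` {f i} \<inter> space M))"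
    and pm: "\<And>i s. i \<in> I \<Longrightarrow> measure M (X i -` {s} \<inter> space M) = pmf (G i) s"
  shows "measure M {\<omega>\<in>space M. (\<Sum>i\<in>I. X i \<omega>) \<le> n}
         = measure_pmf.prob (map_pmf (\<lambda>f. \<Sum>i\<in>I. f i) (Pi_pmf I 0 G)) {..n}"
proof -
  interpret prob_space M by (rule M)
  define S where "S = {f \<in> PiE_dflt I 0 (\<lambda>_. {..n}). (\<Sum>i\<in>I. f i) \<le> n}"
  have finS: "finite S" unfolding S_def using fin by (intro finite_subset[OF _ finite_PiE_dflt[of I "\<lambda>_. {..n}" 0]]) auto
  define A where "A f = {\<omega>\<in>space M. \<forall>i\<in>I. X i \<omega> = f i}" for f :: "nat \<Rightarrow> nat"
  have Aeq: "A f = (\<Inter>i\<in>I. X i -` {f i} \<inter> space M)" if "I \<noteq> {}" for f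
    using that unfolding A_def by auto
  have evs: "X i -` {s} \<inter> space M \<in> sets M" if "i \<in> I" for i s
    by (rule measurable_sets[OF meas[OF that]]) auto
  have Asets: "A f \<in> sets M" for f
  proof (cases "I = {}")
    case True then show ?thesis unfolding A_def by simp
  next
    case False show ?thesis unfolding Aeq[OF False] by (rule sets.finite_INT[OF fin False]) (rule evs)
  qed
  have Ameas: "measure M (A f) = (\<Prod>i\<in>I. pmf (G i) (f i))" for f
  proof (cases "I = {}")
    case True then show ?thesis unfolding A_def by (simp add: prob_space)
  next
    case False then show ?thesis unfolding Aeq[OF False] ind[OF False] using pm by simp
  qed
  have ev: "{\<omega>\<in>space M. (\<Sum>i\<in>I. X i \<omega>) \<le> n} = (\<Union>f\<in>S. A f)"
  proof (intro equalityI subsetI)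
    fix \<omega> assume w: "\<omega> \<in> {\<omega>\<in>space M. (\<Sum>i\<in>I. X i \<omega>) \<le> n}"
    define f where "f i = (if i \<in> I then X i \<omega> else 0)" for i
    have sf: "(\<Sum>i\<in>I. f i) = (\<Sum>i\<in>I. X i \<omega>)" unfolding f_def by simp
    have "X i \<omega> \<le> n" if "i \<in> I" for i
      using member_le_sum[of i I "\<lambda>i. X i \<omega>"] that fin w by auto
    then have "f \<in> S" unfolding S_def PiE_dflt_def using sf w by (auto simp: f_def)
    moreover have "\<omega> \<in> A f" using w unfolding A_def f_def by auto
    ultimately show "\<omega> \<in> (\<Union>f\<in>S. A f)" by blast
  next
    fix \<omega> assume "\<omega> \<in> (\<Union>f\<in>S. A f)"
    then obtain f where f: "f \<in> S" "\<omega> \<in> A f" by blast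
    then have "(\<Sum>i\<in>I. X i \<omega>) = (\<Sum>i\<in>I. f i)" unfolding A_def by simp
    then show "\<omega> \<in> {\<omega>\<in>space M. (\<Sum>i\<in>I. X i \<omega>) \<le> n}" using f unfolding S_def A_def by auto
  qed
  have disj: "disjoint_family_on A S"
  proof (unfold disjoint_family_on_def, intro ballI impI)
    fix f g assume fg: "f \<in> S" "g \<in> S" "f \<noteq> g"
    then obtain i where i: "f i \<noteq> g i" by auto
    then have "i \<in> I" using fg unfolding S_def PiE_dflt_def by auto
    then show "A f \<inter> A g = {}" using i unfolding A_def by auto
  qed
  have "measure M {\<omega>\<in>space M. (\<Sum>i\<in>I. X i \<omega>) \<le> n} = (\<Sum>f\<in>S. measure M (A f))"
    unfolding ev using finS disj Asets by (intro measure_finite_Union) (auto simp: emeasure_finite)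
  also have "\<dots> = (\<Sum>f\<in>S. \<Prod>i\<in>I. pmf (G i) (f i))" using Ameas by simp
  finally have L: "measure M {\<omega>\<in>space M. (\<Sum>i\<in>I. X i \<omega>) \<le> n} = (\<Sum>f\<in>S. \<Prod>i\<in>I. pmf (G i) (f i))" .
  define P where "P = Pi_pmf I 0 G"
  define sf where "sf = (\<lambda>f::nat\<Rightarrow>nat. \<Sum>i\<in>I. f i)"
  have s1: "S \<subseteq> sf -` {..n}" unfolding S_def sf_def by auto
  have s2: "sf -` {..n} \<inter> set_pmf P \<subseteq> S"
  proof
    fix f assume f: "f \<in> sf -` {..n} \<inter> set_pmf P"
    have fP: "f \<in> set_pmf (Pi_pmf I 0 G)" using f unfolding P_def by simp
    have "f \<in> {f. \<forall>x. x \<notin> I \<longrightarrow> f x = 0}" by (rule subsetD[OF set_Pi_pmf_subset[OF fin] fP])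
    then have off: "\<forall>x. x \<notin> I \<longrightarrow> f x = 0" by simp
    have sle: "(\<Sum>i\<in>I. f i) \<le> n" using f unfolding sf_def by auto
    have "f i \<le> n" if "i \<in> I" for i
      using member_le_sum[of i I f] that fin sle by auto
    then show "f \<in> S" unfolding S_def PiE_dflt_def using off sle by auto
  qed
  have "measure_pmf.prob (map_pmf sf P) {..n} = measure_pmf.prob P (sf -` {..n})" by simp
  also have "\<dots> = measure_pmf.prob P S"
  proof (rule antisym)
    have "measure_pmf.prob P (sf -` {..n}) = measure_pmf.prob P (sf -` {..n} \<inter> set_pmf P)"
      by (simp add: measure_Int_set_pmf)
    also have "\<dots> \<le> measure_pmf.prob P S" using s2 by (intro measure_pmf.finite_measure_mono) auto
    finally show "measure_pmf.prob P (sf -` {..n}) \<le> measure_pmf.prob P S" .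
    show "measure_pmf.prob P S \<le> measure_pmf.prob P (sf -` {..n})"
      using s1 by (intro measure_pmf.finite_measure_mono) auto
  qed
  also have "\<dots> = (\<Sum>f\<in>S. pmf P f)" using finS by (simp add: measure_measure_pmf_finite)
  also have "\<dots> = (\<Sum>f\<in>S. \<Prod>i\<in>I. pmf (G i) (f i))"
    unfolding P_def using fin by (intro sum.cong refl pmf_Pi') (auto simp: S_def PiE_dflt_def)
  finally show ?thesis using L unfolding P_def sf_def by simp
qed


lemma indep_prod:
  fixes Z :: "'b \<Rightarrow> 'a \<Rightarrow> nat"
  assumes M: "prob_space M"
    and ind: "prob_space.indep_vars M (\<lambda>_. count_space UNIV) Z K"
    and J: "finite J" "J \<noteq> {}" "J \<subseteq> K"
  shows "measure M (\<Inter>j\<in>J. Z j -` {g j} \<inter> space M) = (\<Prod>j\<in>J. measure M (Z j -` {g j} \<inter> space M))"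
proof -
  interpret prob_space M by (rule M)
  have "indep_sets (\<lambda>i. { Z i -` A \<inter> space M | A. A \<in> sets (count_space UNIV)}) K"
    using ind unfolding indep_vars_def2 by auto
  then show ?thesis
    by (rule indep_setsD) (use J in auto)
qed

lemma geom_pm:
  assumes M: "prob_space M" and g: "geometric_rv M X p" and p: "0 < p" "p \<le> 1"
  shows "measure M (X -` {s} \<inter> space M) = pmf (geom p) s"
proof -
  interpret prob_space M by (rule M)
  have meas: "X \<in> measurable M (count_space UNIV)"
    and ps: "\<And>s. s \<ge> 1 \<Longrightarrow> measure M {\<omega> \<in> space M. X \<omega> = s} = (1 - p) ^ (s - 1) * p"
    using g unfolding geometric_rv_def by auto
  have setq: "\<And>s. X -` {s} \<inter> space M = {\<omega> \<in> space M. X \<omega> = s}" by auto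
  have evs: "\<And>s. X -` {s} \<inter> space M \<in> sets M" by (rule measurable_sets[OF meas]) auto
  show ?thesis
  proof (cases s)
    case (Suc k)
    then show ?thesis using ps[of s] p by (simp add: setq pmf_geom)
  next
    case 0
    define m0 where "m0 = measure M (X -` {0} \<inter> space M)"
    have sumeq: "(\<Sum>s\<le>N. measure M (X -` {s} \<inter> space M)) = m0 + (1 - (1-p)^N)" for N
    proof (induction N)
      case 0 then show ?case by (simp add: m0_def)
    next
      case (Suc N)
      have "measure M (X -` {Suc N} \<inter> space M) = (1-p)^N * p" using ps[of "Suc N"] by (simp add: setq)
      then show ?case using Suc by (simp add: algebra_simps)
    qed
    have bound: "m0 \<le> (1-p)^N" for N
    proof -
      have "measure M (\<Union>s\<in>{..N}. X -` {s} \<inter> space M) = (\<Sum>s\<le>N. measure M (X -` {s} \<inter> space M))"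
        by (intro measure_finite_Union) (auto simp: disjoint_family_on_def evs emeasure_finite)
      moreover have "measure M (\<Union>s\<in>{..N}. X -` {s} \<inter> space M) \<le> 1" by simp
      ultimately show ?thesis using sumeq[of N] by simp
    qed
    have "m0 = 0"
    proof (rule ccontr)
      assume "m0 \<noteq> 0"
      then have "m0 > 0" unfolding m0_def using measure_nonneg[of M] by (simp add: order_less_le)
      then obtain N where "(1-p)^N < m0" using real_arch_pow_inv[of m0 "1-p"] p by auto
      then show False using bound[of N] by simp
    qed
    then show ?thesis using 0 p by (simp add: m0_def pmf_geom)
  qed
qed

theorem corollaryB5:
  fixes M :: "'a measure" and X Y :: "nat \<Rightarrow> 'a \<Rightarrow> nat" and p :: "nat \<Rightarrow> real"
    and m j :: nat
  assumes "prob_space M"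
    and "m \<ge> 1"
    and "\<And>i. i < m \<Longrightarrow> 0 < p i \<and> p i \<le> 1"
    and "\<And>i. i < m \<Longrightarrow> geometric_rv M (X i) (p i)"
    and "\<And>i. i < m \<Longrightarrow> geometric_rv M (Y i) ((\<Sum>k<m. p k) / real m)"
    and "prob_space.indep_vars M (\<lambda>_. count_space UNIV) (case_sum X Y) ({..<m} <+> {..<m})"
    and "j \<ge> 1"
  shows "measure M {\<omega> \<in> space M. (\<Sum>i<m. X i \<omega>) \<ge> j}
           \<ge> measure M {\<omega> \<in> space M. (\<Sum>i<m. Y i \<omega>) \<ge> j}"
proof -
  interpret prob_space M by (rule assms(1))
  define c where "c = (\<Sum>k<m. p k) / real m"
  define I where "I = {..<m::nat}"
  have finI: "finite I" unfolding I_def by simp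
  have csum: "(\<Sum>i\<in>I. p i) = c * card I" unfolding c_def I_def using assms(2) by simp
  have "(\<Sum>k<m. p k) > 0" using assms(2,3) by (intro sum_pos) (auto simp: lessThan_empty_iff)
  moreover have "(\<Sum>k<m. p k) \<le> (\<Sum>k<m. 1)" using assms(3) by (intro sum_mono) auto
  ultimately have c: "0 < c" "c \<le> 1" unfolding c_def using assms(2) by (auto simp: field_simps)
  have indI: "measure M (\<Inter>i\<in>I. W i -` {f i} \<inter> space M) = (\<Prod>i\<in>I. measure M (W i -` {f i} \<inter> space M))"
    if W: "W = X \<or> W = Y" and ne: "I \<noteq> {}" for W f
  proof -
    define inj where "inj = (if W = X then (Inl :: nat \<Rightarrow> nat + nat) else Inr)"
    have injW: "\<And>i. case_sum X Y (inj i) = W i" unfolding inj_def using W by auto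
    have inj_on: "inj_on inj I" unfolding inj_def by (auto simp: inj_on_def)
    have sub: "inj ` I \<subseteq> {..<m} <+> {..<m}" unfolding inj_def I_def by auto
    have "measure M (\<Inter>j\<in>inj ` I. case_sum X Y j -` {case_sum f f j} \<inter> space M)
        = (\<Prod>j\<in>inj ` I. measure M (case_sum X Y j -` {case_sum f f j} \<inter> space M))"
      using ne finI by (intro indep_prod[OF assms(1,6) _ _ sub]) auto
    moreover have ff: "\<And>i. case_sum f f (inj i) = f i" unfolding inj_def by auto
    moreover have "(\<Inter>j\<in>inj ` I. case_sum X Y j -` {case_sum f f j} \<inter> space M)
        = (\<Inter>i\<in>I. case_sum X Y (inj i) -` {case_sum f f (inj i)} \<inter> space M)" by blast
    moreover have "(\<Prod>j\<in>inj ` I. measure M (case_sum X Y j -` {case_sum f f j} \<inter> space M))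
        = (\<Prod>i\<in>I. measure M (case_sum X Y (inj i) -` {case_sum f f (inj i)} \<inter> space M))"
      using prod.reindex[OF inj_on] by (simp add: o_def)
    ultimately show ?thesis by (simp only: injW ff)
  qed
  have key: "measure M {\<omega>\<in>space M. (\<Sum>i\<in>I. W i \<omega>) \<le> n} = measure_pmf.prob (SD I q) {..n}"
    if W: "W = X \<or> W = Y" and gW: "\<And>i. i \<in> I \<Longrightarrow> geometric_rv M (W i) (q i)"
      and qb: "\<And>i. i \<in> I \<Longrightarrow> 0 < q i \<and> q i \<le> 1" for W q n
    unfolding SD_def
  proof (rule prob_sum_le[OF assms(1) finI])
    show "\<And>i. i \<in> I \<Longrightarrow> W i \<in> measurable M (count_space UNIV)"
      using gW unfolding geometric_rv_def by auto
    show "\<And>f. I \<noteq> {} \<Longrightarrow> measure M (\<Inter>i\<in>I. W i -` {f i} \<inter> space M) = (\<Prod>i\<in>I. measure M (W i -` {f i} \<inter> space M))"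
      using indI[OF W] by blast
    show "\<And>i s. i \<in> I \<Longrightarrow> measure M (W i -` {s} \<inter> space M) = pmf (geom (q i)) s"
      using geom_pm[OF assms(1) gW] qb by auto
  qed
  define n where "n = j - 1"
  have kX: "measure M {\<omega>\<in>space M. (\<Sum>i\<in>I. X i \<omega>) \<le> n} = measure_pmf.prob (SD I p) {..n}"
    using assms(3,4) by (intro key) (auto simp: I_def)
  have kY: "measure M {\<omega>\<in>space M. (\<Sum>i\<in>I. Y i \<omega>) \<le> n} = measure_pmf.prob (SD I (\<lambda>_. c)) {..n}"
    using assms(5) c by (intro key) (auto simp: I_def c_def)
  have le: "measure_pmf.prob (SD I p) {..n} \<le> measure_pmf.prob (SD I (\<lambda>_. c)) {..n}"
    using SD_robin[OF finI _ csum refl] assms(3) by (auto simp: I_def)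
  have compl: "measure M {\<omega>\<in>space M. (\<Sum>i\<in>I. W i \<omega>) \<ge> j} = 1 - measure M {\<omega>\<in>space M. (\<Sum>i\<in>I. W i \<omega>) \<le> n}"
    if W: "W = X \<or> W = Y" for W
  proof -
    have ms: "\<And>i. i \<in> I \<Longrightarrow> W i \<in> measurable M (count_space UNIV)"
      using W assms(4,5) unfolding I_def geometric_rv_def by auto
    have "{\<omega>\<in>space M. (\<Sum>i\<in>I. W i \<omega>) \<le> n} \<in> sets M"
      using ms finI by measurable
    moreover have "{\<omega>\<in>space M. (\<Sum>i\<in>I. W i \<omega>) \<ge> j} = space M - {\<omega>\<in>space M. (\<Sum>i\<in>I. W i \<omega>) \<le> n}"
      unfolding n_def using assms(7) by auto
    ultimately show ?thesis by (simp add: prob_compl)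
  qed
  show ?thesis using compl[of X] compl[of Y] kX kY le unfolding I_def by simp
qed

end
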